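(* Let $G$ be a connected graph of order $n\geq 3$ and let $g:A\rightarrow B$ be any function. Then $0\leq fix(F_G)\leq 2n-3$. Both bounds are sharp, i.e. each is attained for some connected graph $G$ of order $n\ge 3$ and some function $g$.
   Context: All graphs are simple, finite, nontrivial and connected. For a graph $H$, an automorphism is a bijection $\alpha:V(H)\to V(H)$ with $\alpha(u)\alpha(v)\in E(H)$ iff $uv\in E(H)$. A set $S\subseteq V(H)$ is a fixing set of $H$ if the only automorphism of $H$ fixing every vertex of $S$ is the identity; the fixing number $fix(H)$ is the minimum cardinality of a fixing set of $H$. Functigraph: let $G_1,G_2$ be disjoint copies of a connected graph $G$, with $A=V(G_1)$, $B=V(G_2)$, and let $g:A\to B$ be a function. The functigraph $F_G$ (which depends on $g$) has vertex set $A\cup B$ and edge set $E(G_1)\cup E(G_2)\cup\{ug(u):u\in A\}$. *)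

theory Defs
  imports Main
begin

definition simple_graph :: "'a set \<Rightarrow> ('a \<Rightarrow> 'a \<Rightarrow> bool) \<Rightarrow> bool" where
  "simple_graph V E \<longleftrightarrow> finite V \<and> (\<forall>u v. E u v \<longrightarrow> u \<in> V \<and> v \<in> V)
     \<and> (\<forall>u v. E u v \<longrightarrow> E v u) \<and> (\<forall>u. \<not> E u u)"

definition connected_graph :: "'a set \<Rightarrow> ('a \<Rightarrow> 'a \<Rightarrow> bool) \<Rightarrow> bool" where
  "connected_graph V E \<longleftrightarrow> V \<noteq> {} \<and>
     (\<forall>u\<in>V. \<forall>v\<in>V. (\<lambda>x y. x \<in> V \<and> y \<in> V \<and> E x y)\<^sup>*\<^sup>* u v)"

definition automorphism :: "'a set \<Rightarrow> ('a \<Rightarrow> 'a \<Rightarrow> bool) \<Rightarrow> ('a \<Rightarrow> 'a) \<Rightarrow> bool" where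
  "automorphism V E \<alpha> \<longleftrightarrow> bij_betw \<alpha> V V \<and>
     (\<forall>u\<in>V. \<forall>v\<in>V. E (\<alpha> u) (\<alpha> v) \<longleftrightarrow> E u v)"

definition fixing_set :: "'a set \<Rightarrow> ('a \<Rightarrow> 'a \<Rightarrow> bool) \<Rightarrow> 'a set \<Rightarrow> bool" where
  "fixing_set V E S \<longleftrightarrow> S \<subseteq> V \<and>
     (\<forall>\<alpha>. automorphism V E \<alpha> \<and> (\<forall>s\<in>S. \<alpha> s = s) \<longrightarrow> (\<forall>v\<in>V. \<alpha> v = v))"

definition fixing_number :: "'a set \<Rightarrow> ('a \<Rightarrow> 'a \<Rightarrow> bool) \<Rightarrow> nat" where
  "fixing_number V E = (LEAST k. \<exists>S. fixing_set V E S \<and> card S = k)"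

text \<open>Functigraph: A = Inl ` V (copy G1), B = Inr ` V (copy G2); the function
  g : A \<rightarrow> B is represented by g :: 'a \<Rightarrow> 'a with g ` V \<subseteq> V, sending Inl u to Inr (g u).\<close>
definition functigraph_vertices :: "'a set \<Rightarrow> ('a + 'a) set" where
  "functigraph_vertices V = Inl ` V \<union> Inr ` V"

fun functigraph_edge :: "'a set \<Rightarrow> ('a \<Rightarrow> 'a \<Rightarrow> bool) \<Rightarrow> ('a \<Rightarrow> 'a) \<Rightarrow> 'a + 'a \<Rightarrow> 'a + 'a \<Rightarrow> bool" where
  "functigraph_edge V E g (Inl u) (Inl v) = E u v"
| "functigraph_edge V E g (Inr u) (Inr v) = E u v"
| "functigraph_edge V E g (Inl u) (Inr w) = (u \<in> V \<and> w = g u)"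
| "functigraph_edge V E g (Inr w) (Inl u) = (u \<in> V \<and> w = g u)"

end

theory Submission
  imports Defs
begin

lemma aut_in: "automorphism VF Ad \<alpha> \<Longrightarrow> x \<in> VF \<Longrightarrow> \<alpha> x \<in> VF"
  unfolding automorphism_def bij_betw_def by auto

lemma aut_inj: "automorphism VF Ad \<alpha> \<Longrightarrow> inj_on \<alpha> VF"
  unfolding automorphism_def bij_betw_def by auto

lemma aut_edge: "automorphism VF Ad \<alpha> \<Longrightarrow> x \<in> VF \<Longrightarrow> y \<in> VF \<Longrightarrow> Ad (\<alpha> x) (\<alpha> y) = Ad x y"
  unfolding automorphism_def by auto

lemma aut_nbr:
  assumes "automorphism VF Ad \<alpha>" "v \<in> VF"
  shows "{u\<in>VF. Ad (\<alpha> v) u} = \<alpha> ` {u\<in>VF. Ad v u}"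
proof
  show "\<alpha> ` {u\<in>VF. Ad v u} \<subseteq> {u\<in>VF. Ad (\<alpha> v) u}"
  proof
    fix u assume "u \<in> \<alpha> ` {u\<in>VF. Ad v u}"
    then obtain x where x: "x \<in> VF" "Ad v x" "u = \<alpha> x" by blast
    have "\<alpha> x \<in> VF" using aut_in[OF assms(1) x(1)] .
    moreover have "Ad (\<alpha> v) (\<alpha> x)" using aut_edge[OF assms(1) assms(2) x(1)] x(2) by simp
    ultimately show "u \<in> {u\<in>VF. Ad (\<alpha> v) u}" using x(3) by simp
  qed
next
  show "{u\<in>VF. Ad (\<alpha> v) u} \<subseteq> \<alpha> ` {u\<in>VF. Ad v u}"
  proof
    fix u assume u: "u \<in> {u\<in>VF. Ad (\<alpha> v) u}"
    have "\<alpha> ` VF = VF" using assms(1) unfolding automorphism_def bij_betw_def by simp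
    then have "u \<in> \<alpha> ` VF" using u by simp
    then obtain x where x: "x \<in> VF" "u = \<alpha> x" by blast
    then have "Ad v x" using u aut_edge[OF assms(1) assms(2) x(1)] by simp
    then show "u \<in> \<alpha> ` {u\<in>VF. Ad v u}" using x by blast
  qed
qed

lemma aut_card:
  assumes "automorphism VF Ad \<alpha>" "v \<in> VF"
  shows "card {u\<in>VF. Ad (\<alpha> v) u} = card {u\<in>VF. Ad v u}"
proof -
  have "inj_on \<alpha> {u\<in>VF. Ad v u}" using aut_inj[OF assms(1)] by (rule inj_on_subset) auto
  then have "card (\<alpha> ` {u\<in>VF. Ad v u}) = card {u\<in>VF. Ad v u}" by (rule card_image)
  then show ?thesis using aut_nbr[OF assms] by simp
qed

lemma aut_prop:
  assumes "automorphism VF Ad \<alpha>" "v \<in> VF" "\<alpha> v = v" "u \<in> VF" "Ad v u"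
    "\<forall>x\<in>VF. Ad v x \<longrightarrow> x \<noteq> u \<longrightarrow> \<alpha> x = x"
  shows "\<alpha> u = u"
proof (rule ccontr)
  assume ne: "\<alpha> u \<noteq> u"
  have "Ad v (\<alpha> u)" using aut_edge[OF assms(1) assms(2) assms(4)] assms(3,5) by simp
  moreover have au: "\<alpha> u \<in> VF" using aut_in assms by metis
  ultimately have "\<alpha> (\<alpha> u) = \<alpha> u" using assms(6) ne by auto
  then have "\<alpha> u = u" using aut_inj[OF assms(1)] au assms(4) unfolding inj_on_def by blast
  then show False using ne by simp
qed

lemma conn_nbr:
  assumes "connected_graph V E" "v \<in> V" "u \<in> V" "u \<noteq> v"
  shows "\<exists>x. E v x"
proof -
  have "(\<lambda>x y. x \<in> V \<and> y \<in> V \<and> E x y)\<^sup>*\<^sup>* v u" using assms unfolding connected_graph_def by auto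
  then show ?thesis using assms(4) by (cases rule: converse_rtranclpE) auto
qed

lemma conn_closed:
  assumes "connected_graph V E" "c \<in> X" "c \<in> V" "v \<in> V" "\<forall>x\<in>X. \<forall>y. E x y \<longrightarrow> y \<in> X"
  shows "v \<in> X"
proof -
  have "(\<lambda>x y. x \<in> V \<and> y \<in> V \<and> E x y)\<^sup>*\<^sup>* c v" using assms unfolding connected_graph_def by auto
  then show ?thesis using assms(2,5) by (induction rule: rtranclp_induct) auto
qed

lemma exists_abw:
  assumes sg: "simple_graph V E" and cg: "connected_graph V E" and c3: "card V \<ge> 3" and gV: "g ` V \<subseteq> V"
  shows "\<exists>a b w. a \<in> V \<and> E a b \<and> E (g a) w \<and> w \<noteq> g b"
proof -
  have fin: "finite V" using sg unfolding simple_graph_def by blast+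
  have two: "\<exists>u\<in>V. u \<noteq> v" if v: "v \<in> V" for v
  proof (rule ccontr)
    assume "\<not> (\<exists>u\<in>V. u \<noteq> v)"
    then have "V = {v}" using v by blast
    then have "card V = 1" by simp
    then show False using c3 by linarith
  qed
  have nb: "\<exists>x. E v x" if v: "v \<in> V" for v
  proof -
    obtain u where "u \<in> V" "u \<noteq> v" using two[OF v] by blast
    then show ?thesis using conn_nbr[OF cg v] by blast
  qed
  have Ein: "\<And>u v. E u v \<Longrightarrow> u \<in> V \<and> v \<in> V" and Esym: "\<And>u v. E u v \<Longrightarrow> E v u"
    and Eirr: "\<And>u. \<not> E u u" using sg unfolding simple_graph_def by blast+
  have "V \<noteq> {}"
  proof
    assume "V = {}"
    then have "card V = 0" by (simp only: card.empty)
    then show False using c3 by linarith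
  qed
  then obtain a where a: "a \<in> V" by blast
  obtain b where ab: "E a b" using nb a by blast
  have b: "b \<in> V" using Ein ab by auto
  have ga: "g a \<in> V" and gb: "g b \<in> V" using a b gV by auto
  show ?thesis
  proof (cases "g a = g b")
    case True
    obtain w where w: "E (g a) w" using nb ga by blast
    have "w \<noteq> g b" using True w Eirr by auto
    then show ?thesis using a ab w by blast
  next
    case False
    show ?thesis
    proof (cases "\<exists>w. E (g a) w \<and> w \<noteq> g b")
      case True
      then obtain w where "E (g a) w" "w \<noteq> g b" by blast
      then show ?thesis using a ab by blast
    next
      case F1: False
      show ?thesis
      proof (cases "\<exists>w. E (g b) w \<and> w \<noteq> g a")
        case True
        then obtain w where "E (g b) w" "w \<noteq> g a" by blast
        then show ?thesis using b Esym[OF ab] by blast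
      next
        case F2: False
        have "\<not> V \<subseteq> {g a, g b}"
        proof
          assume "V \<subseteq> {g a, g b}"
          then have "card V \<le> card {g a, g b}" by (intro card_mono) simp_all
          also have "\<dots> \<le> 2" by (simp add: card_insert_if)
          finally show False using c3 by simp
        qed
        then obtain v where v: "v \<in> V" "v \<notin> {g a, g b}" by blast
        have "v \<in> {g a, g b}"
          by (rule conn_closed[OF cg _ ga v(1)]) (use F1 F2 in blast)+
        then show ?thesis using v by simp
      qed
    qed
  qed
qed

lemma card_fv: "finite V \<Longrightarrow> card (functigraph_vertices V) = 2 * card V"
  unfolding functigraph_vertices_def
  by (subst card_Un_disjoint) (auto simp: card_image)

lemma upper_set:
  fixes V :: "'a set"
  assumes sg: "simple_graph V E" and cg: "connected_graph V E" and c3: "card V \<ge> 3" and gV: "g ` V \<subseteq> V"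
  shows "\<exists>S. fixing_set (functigraph_vertices V) (functigraph_edge V E g) S \<and> card S = 2 * card V - 3"
proof -
  obtain a b w where a: "a \<in> V" and ab: "E a b" and aw: "E (g a) w" and wb: "w \<noteq> g b"
    using exists_abw[OF assms] by blast
  have fin: "finite V" using sg unfolding simple_graph_def by blast+
  have Ein: "\<And>u v. E u v \<Longrightarrow> u \<in> V \<and> v \<in> V" and Esym: "\<And>u v. E u v \<Longrightarrow> E v u"
    and Eirr: "\<And>u. \<not> E u u" using sg unfolding simple_graph_def by blast+
  have b: "b \<in> V" and w: "w \<in> V" and ga: "g a \<in> V" using Ein ab aw by auto
  have wa: "w \<noteq> g a" using aw Eirr by metis
  have ba: "b \<noteq> a" using ab Eirr by metis
  define VF where "VF = functigraph_vertices V"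
  define fe where "fe = functigraph_edge V E g"
  define T where "T = {Inl a, Inr (g a), Inr w}"
  define S where "S = VF - T"
  have TV: "T \<subseteq> VF" unfolding T_def VF_def functigraph_vertices_def using a w ga by auto
  have cT: "card T = 3" unfolding T_def using wa by auto
  have cS: "card S = 2 * card V - 3"
    unfolding S_def using TV cT card_fv[OF fin] card_Diff_subset[of T VF] finite_subset[OF TV] fin by (simp add: VF_def functigraph_vertices_def)
  have fs: "fixing_set VF fe S"
    unfolding fixing_set_def
  proof (intro conjI allI impI)
    show "S \<subseteq> VF" unfolding S_def by auto
  next
    fix \<alpha> assume h: "automorphism VF fe \<alpha> \<and> (\<forall>s\<in>S. \<alpha> s = s)"
    then have aut: "automorphism VF fe \<alpha>" and fixS: "\<And>s. s \<in> S \<Longrightarrow> \<alpha> s = s" by auto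
    have inj: "inj_on \<alpha> VF" using aut_inj[OF aut] .
    have TT: "\<alpha> t \<in> T" if t: "t \<in> T" for t
    proof (rule ccontr)
      assume "\<alpha> t \<notin> T"
      moreover have "\<alpha> t \<in> VF" using aut_in[OF aut] t TV by auto
      ultimately have "\<alpha> t \<in> S" unfolding S_def by auto
      then have "\<alpha> (\<alpha> t) = \<alpha> t" using fixS by auto
      then have "\<alpha> t = t" using inj \<open>\<alpha> t \<in> VF\<close> t TV unfolding inj_on_def by blast
      then show False using \<open>\<alpha> t \<notin> T\<close> t by simp
    qed
    let ?x = "Inl a :: 'a + 'a" and ?y = "Inr (g a) :: 'a + 'a" and ?z = "Inr w :: 'a + 'a"
    have xV: "?x \<in> VF" and yV: "?y \<in> VF" and zV: "?z \<in> VF" using TV unfolding T_def by auto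
    have ax: "\<alpha> ?x \<in> {?x, ?y, ?z}" and ay: "\<alpha> ?y \<in> {?x, ?y, ?z}" and az: "\<alpha> ?z \<in> {?x, ?y, ?z}"
      using TT unfolding T_def by auto
    have d1: "\<alpha> ?x \<noteq> \<alpha> ?y" and d2: "\<alpha> ?x \<noteq> \<alpha> ?z" and d3: "\<alpha> ?y \<noteq> \<alpha> ?z"
      using inj_on_contraD[OF inj _ xV yV] inj_on_contraD[OF inj _ xV zV] inj_on_contraD[OF inj _ yV zV] wa by auto
    have e1: "fe (\<alpha> ?x) (\<alpha> ?y)" using aut_edge[OF aut xV yV] a by (simp add: fe_def)
    have e2: "fe (\<alpha> ?y) (\<alpha> ?z)" using aut_edge[OF aut yV zV] aw by (simp add: fe_def)
    have e3: "\<not> fe (\<alpha> ?x) (\<alpha> ?z)" using aut_edge[OF aut xV zV] wa by (simp add: fe_def)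
    have f: "fe ?x ?y" "fe ?y ?x" "fe ?y ?z" "fe ?z ?y" "\<not> fe ?x ?z" "\<not> fe ?z ?x"
      "\<not> fe ?x ?x" "\<not> fe ?y ?y" "\<not> fe ?z ?z"
      using a aw Esym[OF aw] wa Eirr by (auto simp: fe_def)
    have yy: "\<alpha> ?y = ?y"
    proof -
      have "\<alpha> ?y \<noteq> ?x"
      proof
        assume h: "\<alpha> ?y = ?x"
        from ax have "\<alpha> ?x = ?y \<or> \<alpha> ?x = ?z" using d1 h by simp
        then show False
        proof
          assume hx: "\<alpha> ?x = ?y"
          from az have "\<alpha> ?z = ?z" using d2 d3 hx h by simp
          then show False using e2 h f(5) by simp
        next
          assume hx: "\<alpha> ?x = ?z"
          then show False using e1 h f(6) by simp
        qed
      qed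
      moreover have "\<alpha> ?y \<noteq> ?z"
      proof
        assume h: "\<alpha> ?y = ?z"
        have ax': "\<alpha> ?x = ?x \<or> \<alpha> ?x = ?y \<or> \<alpha> ?x = ?z" using ax by simp
        have "\<alpha> ?x \<noteq> ?z" using d1 h by metis
        then have "\<alpha> ?x = ?x \<or> \<alpha> ?x = ?y" using ax' by blast
        then show False
        proof
          assume hx: "\<alpha> ?x = ?x"
          from az have "\<alpha> ?z = ?y" using d2 d3 hx h by simp
          then show False using e1 hx h f(5) by simp
        next
          assume hx: "\<alpha> ?x = ?y"
          from az have "\<alpha> ?z = ?x" using d2 d3 hx h by simp
          then show False using e2 h f(6) by simp
        qed
      qed
      ultimately show ?thesis using ay by blast
    qed
    have bS: "Inl b \<in> S" unfolding S_def T_def VF_def functigraph_vertices_def using b ba by auto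
    have bV: "Inl b \<in> VF" using bS unfolding S_def by auto
    have fb: "fe (Inl b) (\<alpha> ?x)" using aut_edge[OF aut bV xV] fixS[OF bS] Esym[OF ab] by (simp add: fe_def)
    have fbz: "\<not> fe (Inl b) ?z" using wb by (simp add: fe_def)
    have xx: "\<alpha> ?x = ?x" using ax yy d1 fb fbz by auto
    have zz: "\<alpha> ?z = ?z" using az yy xx d2 d3 by simp
    show "\<forall>v\<in>VF. \<alpha> v = v"
    proof
      fix v assume "v \<in> VF"
      show "\<alpha> v = v"
      proof (cases "v \<in> S")
        case True then show ?thesis using fixS by blast
      next
        case False then have "v \<in> T" using \<open>v \<in> VF\<close> unfolding S_def by blast
        then show ?thesis using xx yy zz unfolding T_def by blast
      qed
    qed
  qed
  show ?thesis
    apply (rule exI[of _ S])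
    using fs cS by (simp only: VF_def fe_def)
qed

lemma upper:
  fixes V :: "'a set"
  assumes "simple_graph V E" "connected_graph V E" "card V \<ge> 3" "g ` V \<subseteq> V"
  shows "fixing_number (functigraph_vertices V) (functigraph_edge V E g) \<le> 2 * card V - 3"
proof -
  obtain S where "fixing_set (functigraph_vertices V) (functigraph_edge V E g) S" "card S = 2 * card V - 3"
    using upper_set[OF assms] by blast
  then show ?thesis unfolding fixing_number_def by (metis (mono_tags, lifting) Least_le)
qed


lemma fv_Inl[simp]: "Inl u \<in> functigraph_vertices V \<longleftrightarrow> u \<in> V"
  and fv_Inr[simp]: "Inr u \<in> functigraph_vertices V \<longleftrightarrow> u \<in> V"
  unfolding functigraph_vertices_def by auto

lemma swap_aut:
  assumes p: "p \<in> VF" and q: "q \<in> VF"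
    and e: "\<And>x y. x \<in> VF \<Longrightarrow> y \<in> VF \<Longrightarrow>
      Ad (if x = p then q else if x = q then p else x) (if y = p then q else if y = q then p else y) = Ad x y"
  shows "automorphism VF Ad (\<lambda>x. if x = p then q else if x = q then p else x)"
  unfolding automorphism_def
proof
  let ?s = "\<lambda>x. if x = p then q else if x = q then p else x"
  show "bij_betw ?s VF VF"
    by (rule bij_betw_byWitness[where f' = ?s]) (use p q in auto)
  show "\<forall>u\<in>VF. \<forall>v\<in>VF. Ad (?s u) (?s v) = Ad u v" using e by blast
qed

definition KE :: "nat \<Rightarrow> nat \<Rightarrow> nat \<Rightarrow> bool" where
  "KE n u v = (u < n \<and> v < n \<and> u \<noteq> v)"

lemma KE_sg: "simple_graph {0..<n} (KE n)"
  unfolding simple_graph_def KE_def by auto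

lemma KE_cg: "0 < n \<Longrightarrow> connected_graph {0..<n} (KE n)"
  unfolding connected_graph_def
proof (intro conjI ballI)
  assume "0 < n" then show "{0..<n} \<noteq> {}" by simp
next
  fix u v assume u: "u \<in> {0..<n}" and v: "v \<in> {0..<n}"
  show "(\<lambda>x y. x \<in> {0..<n} \<and> y \<in> {0..<n} \<and> KE n x y)\<^sup>*\<^sup>* u v"
  proof (cases "u = v")
    case True then show ?thesis by simp
  next
    case False then show ?thesis using u v by (intro r_into_rtranclp) (simp add: KE_def)
  qed
qed

lemma KE_swapL:
  assumes "a < n" "b < n" "x \<in> functigraph_vertices {0..<n}" "y \<in> functigraph_vertices {0..<n}"
  shows "functigraph_edge {0..<n} (KE n) (\<lambda>_. 0)
      (if x = Inl a then Inl b else if x = Inl b then Inl a else x)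
      (if y = Inl a then Inl b else if y = Inl b then Inl a else y)
    = functigraph_edge {0..<n} (KE n) (\<lambda>_. 0) x y"
  using assms by (cases x; cases y) (auto simp: KE_def)

lemma KE_swapR:
  assumes "a < n" "b < n" "a \<noteq> 0" "b \<noteq> 0" "x \<in> functigraph_vertices {0..<n}" "y \<in> functigraph_vertices {0..<n}"
  shows "functigraph_edge {0..<n} (KE n) (\<lambda>_. 0)
      (if x = Inr a then Inr b else if x = Inr b then Inr a else x)
      (if y = Inr a then Inr b else if y = Inr b then Inr a else y)
    = functigraph_edge {0..<n} (KE n) (\<lambda>_. 0) x y"
  using assms by (cases x; cases y) (auto simp: KE_def)

lemma swap_contra:
  assumes fs: "fixing_set VF Ad S" and p: "p \<in> VF" and q: "q \<in> VF" and pq: "p \<noteq> q"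
    and pS: "p \<notin> S" and qS: "q \<notin> S"
    and aut: "automorphism VF Ad (\<lambda>x. if x = p then q else if x = q then p else x)"
  shows False
proof -
  let ?s = "\<lambda>x. if x = p then q else if x = q then p else x"
  have "\<forall>s\<in>S. ?s s = s" using pS qS by auto
  then have "\<forall>v\<in>VF. ?s v = v" using fs aut unfolding fixing_set_def by blast
  then have "?s p = p" using p by blast
  then show False using pq by simp
qed

lemma card_le_one_minus:
  assumes "finite X" "\<forall>x\<in>X - S. \<forall>y\<in>X - S. x = y"
  shows "card X \<le> card (X \<inter> S) + 1"
proof -
  have "card (X - S) \<le> Suc 0" using card_le_Suc0_iff_eq[of "X - S"] assms by auto
  moreover have "X = (X \<inter> S) \<union> (X - S)" by blast
  then have "card X \<le> card (X \<inter> S) + card (X - S)" by (metis card_Un_le)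
  ultimately show ?thesis by linarith
qed

lemma KE_lower:
  assumes n3: "3 \<le> n"
    and fs: "fixing_set (functigraph_vertices {0..<n}) (functigraph_edge {0..<n} (KE n) (\<lambda>_. 0)) S"
  shows "2 * n - 3 \<le> card S"
proof -
  let ?VF = "functigraph_vertices {0..<n}" and ?fe = "functigraph_edge {0..<n} (KE n) (\<lambda>_. 0)"
  have SV: "S \<subseteq> ?VF" using fs unfolding fixing_set_def by blast
  have finVF: "finite ?VF" unfolding functigraph_vertices_def by simp
  have finS: "finite S" using finite_subset[OF SV finVF] .
  define X :: "(nat + nat) set" where "X = Inl ` {0..<n}"
  define Y :: "(nat + nat) set" where "Y = Inr ` {1..<n}"
  have cX: "card X = n" unfolding X_def by (simp add: card_image)
  have cY: "card Y = n - 1" unfolding Y_def by (simp add: card_image)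
  have hX: "\<forall>x\<in>X - S. \<forall>y\<in>X - S. x = y"
  proof (intro ballI, rule ccontr)
    fix x y assume x: "x \<in> X - S" and y: "y \<in> X - S" and ne: "x \<noteq> y"
    obtain a where a: "a < n" "x = Inl a" using x unfolding X_def by auto
    obtain b where b: "b < n" "y = Inl b" using y unfolding X_def by auto
    have "automorphism ?VF ?fe (\<lambda>z. if z = Inl a then Inl b else if z = Inl b then Inl a else z)"
      by (rule swap_aut) (use a b KE_swapL in auto)
    then show False using swap_contra[OF fs, of "Inl a" "Inl b"] a b x y ne by auto
  qed
  have hY: "\<forall>x\<in>Y - S. \<forall>y\<in>Y - S. x = y"
  proof (intro ballI, rule ccontr)
    fix x y assume x: "x \<in> Y - S" and y: "y \<in> Y - S" and ne: "x \<noteq> y"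
    obtain a where a: "a < n" "1 \<le> a" "x = Inr a" using x unfolding Y_def by auto
    obtain b where b: "b < n" "1 \<le> b" "y = Inr b" using y unfolding Y_def by auto
    have "automorphism ?VF ?fe (\<lambda>z. if z = Inr a then Inr b else if z = Inr b then Inr a else z)"
      by (rule swap_aut) (use a b KE_swapR in auto)
    then show False using swap_contra[OF fs, of "Inr a" "Inr b"] a b x y ne by auto
  qed
  have 1: "card X \<le> card (X \<inter> S) + 1" using card_le_one_minus[OF _ hX] unfolding X_def by simp
  have 2: "card Y \<le> card (Y \<inter> S) + 1" using card_le_one_minus[OF _ hY] unfolding Y_def by simp
  have disj: "(X \<inter> S) \<inter> (Y \<inter> S) = {}" unfolding X_def Y_def by auto
  have "card ((X \<inter> S) \<union> (Y \<inter> S)) = card (X \<inter> S) + card (Y \<inter> S)"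
    by (rule card_Un_disjoint) (use finS disj in auto)
  moreover have "card ((X \<inter> S) \<union> (Y \<inter> S)) \<le> card S"
    by (rule card_mono[OF finS]) auto
  ultimately show ?thesis using 1 2 cX cY n3 by linarith
qed

lemma KE_example:
  assumes n3: "3 \<le> n"
  shows "fixing_number (functigraph_vertices {0..<n}) (functigraph_edge {0..<n} (KE n) (\<lambda>_. 0)) = 2 * n - 3"
proof -
  let ?VF = "functigraph_vertices {0..<n}" and ?fe = "functigraph_edge {0..<n} (KE n) (\<lambda>_. 0)"
  have gV: "(\<lambda>_. 0::nat) ` {0..<n} \<subseteq> {0..<n}" using n3 by auto
  have cV: "card {0..<n} = n" by simp
  have cg: "connected_graph {0..<n} (KE n)" using KE_cg n3 by simp
  obtain S0 where S0: "fixing_set ?VF ?fe S0" "card S0 = 2 * n - 3"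
    using upper_set[OF KE_sg cg _ gV] n3 cV by auto
  have ex: "\<exists>k. \<exists>S. fixing_set ?VF ?fe S \<and> card S = k" using S0 by blast
  obtain S1 where S1: "fixing_set ?VF ?fe S1" "card S1 = fixing_number ?VF ?fe"
    using LeastI_ex[OF ex] unfolding fixing_number_def by blast
  have "fixing_number ?VF ?fe \<le> 2 * n - 3"
    unfolding fixing_number_def using S0 by (metis (mono_tags, lifting) Least_le)
  moreover have "2 * n - 3 \<le> fixing_number ?VF ?fe" using KE_lower[OF n3 S1(1)] S1(2) by simp
  ultimately show ?thesis by linarith
qed


definition PE :: "nat \<Rightarrow> nat \<Rightarrow> nat \<Rightarrow> bool" where
  "PE n i j = (i < n \<and> j < n \<and> (j = Suc i \<or> i = Suc j))"

definition pg :: "nat \<Rightarrow> nat \<Rightarrow> nat" where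
  "pg n i = (if i = n - 1 then 1 else 0)"

lemma PE_sg: "simple_graph {0..<n} (PE n)"
  unfolding simple_graph_def PE_def by auto

lemma PE_cg:
  assumes "0 < n" shows "connected_graph {0..<n} (PE n)"
proof -
  let ?R = "\<lambda>x y. x \<in> {0..<n} \<and> y \<in> {0..<n} \<and> PE n x y"
  have h: "i < n \<Longrightarrow> ?R\<^sup>*\<^sup>* 0 i \<and> ?R\<^sup>*\<^sup>* i 0" for i
  proof (induction i)
    case 0 then show ?case by simp
  next
    case (Suc i)
    then have r1: "?R i (Suc i)" and r2: "?R (Suc i) i" by (auto simp: PE_def)
    from Suc have a1: "?R\<^sup>*\<^sup>* 0 i" and a2: "?R\<^sup>*\<^sup>* i 0" by auto
    have "?R\<^sup>*\<^sup>* 0 (Suc i)" by (rule rtranclp.rtrancl_into_rtrancl[OF a1 r1])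
    moreover have "?R\<^sup>*\<^sup>* (Suc i) 0" by (rule converse_rtranclp_into_rtranclp[OF r2 a2])
    ultimately show ?case by blast
  qed
  show ?thesis unfolding connected_graph_def
  proof (intro conjI ballI)
    show "{0..<n} \<noteq> {}" using assms by simp
  next
    fix u v assume "u \<in> {0..<n}" "v \<in> {0..<n}"
    then have "?R\<^sup>*\<^sup>* u 0" "?R\<^sup>*\<^sup>* 0 v" using h by auto
    then show "?R\<^sup>*\<^sup>* u v" by simp
  qed
qed

context
  fixes n :: nat
  assumes n3: "3 \<le> n"
begin

abbreviation "pVF \<equiv> functigraph_vertices {0..<n}"
abbreviation "pfe \<equiv> functigraph_edge {0..<n} (PE n) (pg n)"

lemma pg01: "pg n i = 0 \<or> pg n i = 1" unfolding pg_def by auto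

lemma finVF: "finite pVF" unfolding functigraph_vertices_def by simp

lemma nbr_leaf: "{u \<in> pVF. pfe (Inr (n - 1)) u} = {Inr (n - 2)}"
proof -
  have "u \<in> pVF \<Longrightarrow> pfe (Inr (n - 1)) u \<longleftrightarrow> u = Inr (n - 2)" for u
    using n3 by (cases u) (auto simp: PE_def pg_def)
  moreover have "Inr (n - 2) \<in> pVF" using n3 by simp
  ultimately show ?thesis by blast
qed

lemma two_nbrs:
  assumes v: "v \<in> pVF" and ne: "v \<noteq> Inr (n - 1)"
  shows "2 \<le> card {u \<in> pVF. pfe v u}"
proof -
  have "\<exists>p q. p \<noteq> q \<and> p \<in> pVF \<and> q \<in> pVF \<and> pfe v p \<and> pfe v q"
  proof (cases v)
    case (Inl i)
    then have i: "i < n" using v by simp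
    show ?thesis
    proof (cases "Suc i < n")
      case True
      then show ?thesis using Inl i pg01[of i] n3
        by (intro exI[of _ "Inr (pg n i)"] exI[of _ "Inl (Suc i)"]) (auto simp: PE_def)
    next
      case False
      then have "i = n - 1" using i by simp
      then show ?thesis using Inl i pg01[of i] n3
        by (intro exI[of _ "Inr (pg n i)"] exI[of _ "Inl (i - 1)"]) (auto simp: PE_def)
    qed
  next
    case (Inr i)
    then have i: "i < n" "i \<noteq> n - 1" using v ne by auto
    show ?thesis
    proof (cases "i = 0")
      case True
      have "pg n 0 = 0" using n3 by (simp add: pg_def)
      then show ?thesis using Inr True n3
        by (intro exI[of _ "Inr 1"] exI[of _ "Inl 0"]) (auto simp: PE_def)
    next
      case False
      then show ?thesis using Inr i n3
        by (intro exI[of _ "Inr (i - 1)"] exI[of _ "Inr (Suc i)"]) (auto simp: PE_def)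
    qed
  qed
  then obtain p q where pq: "p \<noteq> q" "p \<in> pVF" "q \<in> pVF" "pfe v p" "pfe v q" by blast
  have "{p, q} \<subseteq> {u \<in> pVF. pfe v u}" using pq by auto
  moreover have "finite {u \<in> pVF. pfe v u}" using finVF by simp
  ultimately have "card {p, q} \<le> card {u \<in> pVF. pfe v u}" by (rule card_mono[rotated])
  then show ?thesis using pq(1) by simp
qed

lemma rigid:
  assumes aut: "automorphism pVF pfe \<alpha>"
  shows "\<forall>v\<in>pVF. \<alpha> v = v"
proof -
  have inj: "inj_on \<alpha> pVF" using aut_inj[OF aut] .
  have leafV: "Inr (n - 1) \<in> pVF" using n3 by simp
  have s1: "\<alpha> (Inr (n - 1)) = Inr (n - 1)"
  proof (rule ccontr)
    assume ne: "\<alpha> (Inr (n - 1)) \<noteq> Inr (n - 1)"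
    have "card {u \<in> pVF. pfe (\<alpha> (Inr (n - 1))) u} = card {u \<in> pVF. pfe (Inr (n - 1)) u}"
      by (rule aut_card[OF aut leafV])
    also have "\<dots> = 1" using nbr_leaf by simp
    finally have c1: "card {u \<in> pVF. pfe (\<alpha> (Inr (n - 1))) u} = 1" .
    have "2 \<le> card {u \<in> pVF. pfe (\<alpha> (Inr (n - 1))) u}"
      by (rule two_nbrs[OF aut_in[OF aut leafV] ne])
    then show False using c1 by simp
  qed
  have s2: "\<forall>k. n - 1 - d \<le> k \<and> k < n \<longrightarrow> \<alpha> (Inr k) = Inr k" if "d \<le> n - 2" for d
    using that
  proof (induction d)
    case 0
    show ?case
    proof (intro allI impI)
      fix k assume "n - 1 - 0 \<le> k \<and> k < n"
      then have "k = n - 1" by linarith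
      then show "\<alpha> (Inr k) = Inr k" using s1 by simp
    qed
  next
    case (Suc d)
    define k where "k = n - 2 - d"
    have k1: "1 \<le> k" and kn: "Suc k < n" and kk: "n - 1 - Suc d = k" using Suc.prems n3 unfolding k_def by auto
    have IH: "\<And>j. n - 1 - d \<le> j \<Longrightarrow> j < n \<Longrightarrow> \<alpha> (Inr j) = Inr j" using Suc by auto
    have vV: "Inr (Suc k) \<in> pVF" and uV: "Inr k \<in> pVF" using kn by auto
    have vfix: "\<alpha> (Inr (Suc k)) = Inr (Suc k)" using IH[of "Suc k"] kn unfolding k_def by auto
    have adj: "pfe (Inr (Suc k)) (Inr k)" using kn by (simp add: PE_def)
    have others: "\<forall>x\<in>pVF. pfe (Inr (Suc k)) x \<longrightarrow> x \<noteq> Inr k \<longrightarrow> \<alpha> x = x"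
    proof (intro ballI impI)
      fix x assume x: "x \<in> pVF" "pfe (Inr (Suc k)) x" "x \<noteq> Inr k"
      show "\<alpha> x = x"
      proof (cases x)
        case (Inl y)
        then have "Suc k = pg n y" using x by simp
        then show ?thesis using pg01[of y] k1 by linarith
      next
        case (Inr j)
        then have "j = Suc (Suc k)" "j < n" using x by (auto simp: PE_def)
        then show ?thesis using IH[of j] Inr unfolding k_def by auto
      qed
    qed
    have fk: "\<alpha> (Inr k) = Inr k" by (rule aut_prop[OF aut vV vfix uV adj others])
    have kd: "n - 1 - d = Suc k" using Suc.prems n3 unfolding k_def by linarith
    show ?case
    proof (intro allI impI)
      fix j assume j: "n - 1 - Suc d \<le> j \<and> j < n"
      show "\<alpha> (Inr j) = Inr j"
      proof (cases "j = k")
        case True then show ?thesis using fk by simp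
      next
        case False then have "n - 1 - d \<le> j" using j kk kd by linarith
        then show ?thesis using IH j by blast
      qed
    qed
  qed
  have allR1: "\<alpha> (Inr k) = Inr k" if k: "1 \<le> k" "k < n" for k
  proof -
    have "n - 1 - (n - 2) \<le> k \<and> k < n" using k n3 by linarith
    then show ?thesis using s2[of "n - 2"] by blast
  qed
  have r1V: "Inr 1 \<in> pVF" and r0V: "Inr 0 \<in> pVF" and r2V: "Inr 2 \<in> pVF" and lV: "Inl (n - 1) \<in> pVF"
    using n3 by auto
  have fix1: "\<alpha> (Inr 1) = Inr 1" by (rule allR1) (use n3 in linarith)+
  have fix2: "\<alpha> (Inr 2) = Inr 2" by (rule allR1) (use n3 in linarith)+
  have nb1: "\<And>x. x \<in> pVF \<Longrightarrow> pfe (Inr 1) x \<Longrightarrow> x = Inr 0 \<or> x = Inr 2 \<or> x = Inl (n - 1)"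
  proof -
    fix x assume x: "x \<in> pVF" "pfe (Inr 1) x"
    show "x = Inr 0 \<or> x = Inr 2 \<or> x = Inl (n - 1)"
    proof (cases x)
      case (Inl y)
      then have "1 = pg n y" using x by simp
      then have "y = n - 1" by (cases "y = n - 1") (simp_all add: pg_def)
      then show ?thesis using Inl by simp
    next
      case (Inr j)
      then show ?thesis using x by (auto simp: PE_def)
    qed
  qed
  have s3: "\<alpha> (Inr 0) = Inr 0"
  proof -
    have "pfe (Inr 1) (Inr 0)" using n3 by (simp add: PE_def)
    then have e0: "pfe (\<alpha> (Inr 1)) (\<alpha> (Inr 0))" using aut_edge[OF aut r1V r0V] by blast
    then have e: "pfe (Inr 1) (\<alpha> (Inr 0))" unfolding fix1 .
    have a0V: "\<alpha> (Inr 0) \<in> pVF" using aut_in[OF aut r0V] .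
    have "\<alpha> (Inr 0) \<noteq> Inr 2"
    proof
      assume "\<alpha> (Inr 0) = Inr 2"
      then have "\<alpha> (Inr 0) = \<alpha> (Inr 2)" using fix2 by simp
      then show False using inj_on_contraD[OF inj _ r0V r2V] by simp
    qed
    moreover have "\<alpha> (Inr 0) \<noteq> Inl (n - 1)"
    proof
      assume h: "\<alpha> (Inr 0) = Inl (n - 1)"
      have ceq: "card {u \<in> pVF. pfe (\<alpha> (Inr 0)) u} = card {u \<in> pVF. pfe (Inr 0) u}"
        by (rule aut_card[OF aut r0V])
      have "{u \<in> pVF. pfe (Inl (n - 1)) u} \<subseteq> {Inl (n - 2), Inr 1}"
      proof
        fix u assume u: "u \<in> {u \<in> pVF. pfe (Inl (n - 1)) u}"
        show "u \<in> {Inl (n - 2), Inr 1}"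
        proof (cases u)
          case (Inl y) then show ?thesis using u by (auto simp: PE_def)
        next
          case (Inr y) then show ?thesis using u by (auto simp: pg_def)
        qed
      qed
      then have "card {u \<in> pVF. pfe (Inl (n - 1)) u} \<le> card {Inl (n - 2), Inr 1 :: nat + nat}"
        by (rule card_mono[rotated]) simp
      also have "\<dots> \<le> 2" by (simp add: card_insert_if)
      finally have c2: "card {u \<in> pVF. pfe (Inl (n - 1)) u} \<le> 2" .
      have "pg n 0 = 0" "pg n 1 = 0" using n3 by (auto simp: pg_def)
      then have "{Inr 1, Inl 0, Inl 1} \<subseteq> {u \<in> pVF. pfe (Inr 0) u}" using n3 by (auto simp: PE_def)
      then have "card {Inr 1, Inl 0, Inl 1 :: nat + nat} \<le> card {u \<in> pVF. pfe (Inr 0) u}"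
        by (rule card_mono[rotated]) (simp add: finVF)
      then have "3 \<le> card {u \<in> pVF. pfe (Inr 0) u}" by simp
      moreover have "card {u \<in> pVF. pfe (Inl (n - 1)) u} = card {u \<in> pVF. pfe (Inr 0) u}"
        using ceq h by simp
      ultimately show False using c2 by linarith
    qed
    moreover have "\<alpha> (Inr 0) = Inr 0 \<or> \<alpha> (Inr 0) = Inr 2 \<or> \<alpha> (Inr 0) = Inl (n - 1)"
      by (rule nb1[OF a0V e])
    ultimately show ?thesis by simp
  qed
  have allR: "\<And>k. k < n \<Longrightarrow> \<alpha> (Inr k) = Inr k"
    using allR1 s3 by (metis less_one not_le)
  have s4: "\<alpha> (Inl (n - 1)) = Inl (n - 1)"
  proof (rule aut_prop[OF aut r1V fix1 lV])
    show "pfe (Inr 1) (Inl (n - 1))" using n3 by (simp add: pg_def)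
    show "\<forall>x\<in>pVF. pfe (Inr 1) x \<longrightarrow> x \<noteq> Inl (n - 1) \<longrightarrow> \<alpha> x = x"
      using nb1 s3 fix2 by blast
  qed
  have s5: "\<forall>k. n - 1 - d \<le> k \<and> k < n \<longrightarrow> \<alpha> (Inl k) = Inl k" if "d \<le> n - 1" for d
    using that
  proof (induction d)
    case 0
    show ?case
    proof (intro allI impI)
      fix k assume "n - 1 - 0 \<le> k \<and> k < n"
      then have "k = n - 1" by linarith
      then show "\<alpha> (Inl k) = Inl k" using s4 by simp
    qed
  next
    case (Suc d)
    define k where "k = n - 2 - d"
    have kn: "Suc k < n" and kk: "n - 1 - Suc d = k" using Suc.prems n3 unfolding k_def by auto
    have IH: "\<And>j. n - 1 - d \<le> j \<Longrightarrow> j < n \<Longrightarrow> \<alpha> (Inl j) = Inl j" using Suc by auto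
    have vV: "Inl (Suc k) \<in> pVF" and uV: "Inl k \<in> pVF" using kn by auto
    have vfix: "\<alpha> (Inl (Suc k)) = Inl (Suc k)" using IH[of "Suc k"] kn unfolding k_def by auto
    have adj: "pfe (Inl (Suc k)) (Inl k)" using kn by (simp add: PE_def)
    have others: "\<forall>x\<in>pVF. pfe (Inl (Suc k)) x \<longrightarrow> x \<noteq> Inl k \<longrightarrow> \<alpha> x = x"
    proof (intro ballI impI)
      fix x assume x: "x \<in> pVF" "pfe (Inl (Suc k)) x" "x \<noteq> Inl k"
      show "\<alpha> x = x"
      proof (cases x)
        case (Inl j)
        then have "j = Suc (Suc k)" "j < n" using x by (auto simp: PE_def)
        then show ?thesis using IH[of j] Inl unfolding k_def by auto
      next
        case (Inr j)
        then have "j < n" using x by simp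
        then show ?thesis using allR Inr by simp
      qed
    qed
    have fk: "\<alpha> (Inl k) = Inl k" by (rule aut_prop[OF aut vV vfix uV adj others])
    have kd: "n - 1 - d = Suc k" using Suc.prems n3 unfolding k_def by linarith
    show ?case
    proof (intro allI impI)
      fix j assume j: "n - 1 - Suc d \<le> j \<and> j < n"
      show "\<alpha> (Inl j) = Inl j"
      proof (cases "j = k")
        case True then show ?thesis using fk by simp
      next
        case False then have "n - 1 - d \<le> j" using j kk kd by linarith
        then show ?thesis using IH j by blast
      qed
    qed
  qed
  have allL: "\<And>k. k < n \<Longrightarrow> \<alpha> (Inl k) = Inl k"
    using s5[of "n - 1"] by auto
  show ?thesis
  proof
    fix v assume "v \<in> pVF"
    then show "\<alpha> v = v" using allL allR by (cases v) auto
  qed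
qed

lemma PE_example:
  "fixing_number pVF pfe = 0"
proof -
  have fs: "fixing_set pVF pfe {}" unfolding fixing_set_def using rigid by blast
  have "fixing_number pVF pfe \<le> card ({} :: (nat + nat) set)"
    unfolding fixing_number_def by (rule Least_le) (use fs in blast)
  then show ?thesis by simp
qed

end

theorem proposition2p5:
  "(\<forall>(V :: 'a set) E g. simple_graph V E \<and> connected_graph V E \<and> card V \<ge> 3 \<and> g ` V \<subseteq> V \<longrightarrow>
      0 \<le> fixing_number (functigraph_vertices V) (functigraph_edge V E g) \<and>
      fixing_number (functigraph_vertices V) (functigraph_edge V E g) \<le> 2 * card V - 3)
   \<and> (\<forall>n::nat. n \<ge> 3 \<longrightarrow>
      (\<exists>(V :: nat set) E g. simple_graph V E \<and> connected_graph V E \<and> card V = n \<and> g ` V \<subseteq> V \<and>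
         fixing_number (functigraph_vertices V) (functigraph_edge V E g) = 0)
    \<and> (\<exists>(V :: nat set) E g. simple_graph V E \<and> connected_graph V E \<and> card V = n \<and> g ` V \<subseteq> V \<and>
         fixing_number (functigraph_vertices V) (functigraph_edge V E g) = 2 * n - 3))"
proof (intro conjI allI impI)
  fix V :: "'a set" and E g
  assume h: "simple_graph V E \<and> connected_graph V E \<and> card V \<ge> 3 \<and> g ` V \<subseteq> V"
  show "0 \<le> fixing_number (functigraph_vertices V) (functigraph_edge V E g)" by simp
  show "fixing_number (functigraph_vertices V) (functigraph_edge V E g) \<le> 2 * card V - 3"
    using upper h by blast
next
  fix n :: nat assume n3: "3 \<le> n"
  have gV: "pg n ` {0..<n} \<subseteq> {0..<n}"
  proof
    fix y assume "y \<in> pg n ` {0..<n}"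
    then obtain i where "y = pg n i" by blast
    then have "y = 0 \<or> y = 1" using pg01[OF n3] by simp
    then show "y \<in> {0..<n}" using n3 by auto
  qed
  show "\<exists>(V :: nat set) E g. simple_graph V E \<and> connected_graph V E \<and> card V = n \<and> g ` V \<subseteq> V \<and>
         fixing_number (functigraph_vertices V) (functigraph_edge V E g) = 0"
    using PE_sg PE_cg[of n] n3 gV PE_example[OF n3] by (intro exI[of _ "{0..<n}"] exI[of _ "PE n"] exI[of _ "pg n"]) simp
  have gV2: "(\<lambda>_. 0::nat) ` {0..<n} \<subseteq> {0..<n}" using n3 by auto
  show "\<exists>(V :: nat set) E g. simple_graph V E \<and> connected_graph V E \<and> card V = n \<and> g ` V \<subseteq> V \<and>
         fixing_number (functigraph_vertices V) (functigraph_edge V E g) = 2 * n - 3"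
    using KE_sg KE_cg[of n] n3 gV2 KE_example[OF n3] by (intro exI[of _ "{0..<n}"] exI[of _ "KE n"] exI[of _ "\<lambda>_. 0"]) simp
qed

end
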